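(* Let $d\ge 2$ and $x\ge 1$ be integers, and let $U_1,\dots,U_x\in U(d^2)$ be unitary gates. Let $R_x$ and $L_x$ be the linear maps on $W^{\otimes x}$ built from $U_1,\dots,U_x$ as defined in the context, and for $y=0,\dots,x$ set $$r_y=\mathrm{tri}^{\otimes y}\otimes \mathrm{circ}^{\otimes (x-y)},\qquad \ell_y=\mathrm{circ}^{\otimes y}\otimes \mathrm{cross}^{\otimes (x-y)}\in W^{\otimes x},$$ where the $m$-th tensor factor corresponds to the $m$-th gate. (i) If all $U_1,\dots,U_x$ are dual-unitary, then $R_x$ has at least $x+1$ (linearly independent) right eigenvectors and at least $x+1$ left eigenvectors with eigenvalue $d^2$, explicitly given by $\{r_y\}_{y=0}^{x}$, i.e. $R_x r_y=d^2 r_y$ and $r_y^{T}R_x=d^2 r_y^{T}$ for all $y=0,\dots,x$; likewise $L_x\ell_y=d^2\ell_y$ and $\ell_y^{T}L_x=d^2\ell_y^{T}$ for all $y=0,\dots,x$. (ii) If the gates $U_1,\dots,U_x$ are merely unitary (not necessarily dual-unitary), then $r_0$ and $\ell_0$ are still right eigenvectors with eigenvalue $d^2$ (i.e. $R_xr_0=d^2r_0$, $L_x\ell_0=d^2\ell_0$), and $r_x$, $\ell_x$ are still left eigenvectors with eigenvalue $d^2$ (i.e. $r_x^TR_x=d^2r_x^T$, $\ell_x^TL_x=d^2\ell_x^T$).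
   Context: Let $V=\mathbb C^d$ with orthonormal basis $\{|i\rangle\}_{i=1}^d$, and $W=V^{\otimes 8}$ with basis $|i_1,\dots,i_8\rangle$. Define the (real) vectors in $W$: $\mathrm{circ}=\sum_{i_1,\dots,i_4=1}^d|i_1,i_1,i_2,i_2,i_3,i_3,i_4,i_4\rangle$, $\mathrm{tri}=\sum_{i_1,\dots,i_4=1}^d|i_1,i_2,i_2,i_1,i_3,i_4,i_4,i_3\rangle$, $\mathrm{cross}=\sum_{i_1,\dots,i_4=1}^d|i_1,i_2,i_3,i_4,i_4,i_3,i_2,i_1\rangle$; for $v\in W$ write $v_k=\langle k|v\rangle$ for basis labels $k$, and $v^T$ for the transpose (row) vector. For $U\in U(d^2)$ acting on $V\otimes V$, define the replicated ("folded") gate $G_U$ on $W\otimes W$ by identifying $W\otimes W\cong\bigotimes_{a=1}^{8}(V^{(a)}_{\rm left}\otimes V^{(a)}_{\rm right})$ (the $a$-th copy of $V$ in the first, resp. second, factor $W$) and setting $G_U=\bigotimes_{a=1}^8 U^{(a)}$, where $U^{(a)}=U$ for odd $a$ and $U^{(a)}=\bar U$ (entrywise complex conjugate in the given basis) for even $a$, each acting on $V^{(a)}_{\rm left}\otimes V^{(a)}_{\rm right}$. For basis labels $a,b,c,e$ of $W$ write $\langle c,e|G_U|a,b\rangle$ (first slot = left leg, second slot = right leg; $a$ = input-left, $b$ = input-right, $c$ = output-left, $e$ = output-right). Transfer matrices: for gates $U_1,\dots,U_x$ with $G_m=G_{U_m}$, define $R_x,L_x$ on $W^{\otimes x}$ by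 $$\langle e_1\dots e_x|R_x|a_1\dots a_x\rangle=\sum_{k_0,\dots,k_x}\mathrm{tri}_{k_0}\Big(\prod_{m=1}^x\langle k_{m-1},e_m|G_m|a_m,k_m\rangle\Big)\mathrm{circ}_{k_x},$$ $$\langle b_1\dots b_x|L_x|c_1\dots c_x\rangle=\sum_{k_0,\dots,k_x}\mathrm{circ}_{k_0}\Big(\prod_{m=1}^x\langle c_m,k_m|G_m|k_{m-1},b_m\rangle\Big)\mathrm{cross}_{k_x},$$ all sums over basis labels of $W$. Dual-unitarity: for $U\in U(d^2)$ define $\tilde U$ by $\langle ij|\tilde U|k\ell\rangle=\langle j\ell|U|ik\rangle$; $U$ is dual-unitary if both $U$ and $\tilde U$ are unitary. *)

theory Defs
  imports Complex_Main "HOL-Library.FuncSet"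
begin

text \<open>Basis labels of V = C^d are 0..d-1 (instead of 1..d).
  A two-site gate U on V (x) V is given by its matrix entries
  U i j k l = <i j| U |k l>.  A basis label of W = V^(x)8 is a function
  k :: nat => nat on {0..<8} (position t = a-1 for the a-th copy), and a
  basis label of W^(x)x is a function on {1..x} (the m-th factor belongs to the
  m-th gate) with values in the labels of W.\<close>

type_synonym gate = "nat \<Rightarrow> nat \<Rightarrow> nat \<Rightarrow> nat \<Rightarrow> complex"
type_synonym wlabel = "nat \<Rightarrow> nat"
type_synonym mlabel = "nat \<Rightarrow> wlabel"

definition Wl :: "nat \<Rightarrow> wlabel set" where
  "Wl d = PiE {..<8} (\<lambda>_. {..<d})"

definition Ml :: "nat \<Rightarrow> nat \<Rightarrow> mlabel set" where
  "Ml d x = PiE {1..x} (\<lambda>_. Wl d)"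

definition unitary_gate :: "nat \<Rightarrow> gate \<Rightarrow> bool" where
  "unitary_gate d U \<longleftrightarrow>
     (\<forall>i<d. \<forall>j<d. \<forall>k<d. \<forall>l<d.
        (\<Sum>p<d. \<Sum>q<d. cnj (U p q i j) * U p q k l) = (if i = k \<and> j = l then 1 else 0)) \<and>
     (\<forall>i<d. \<forall>j<d. \<forall>k<d. \<forall>l<d.
        (\<Sum>p<d. \<Sum>q<d. U i j p q * cnj (U k l p q)) = (if i = k \<and> j = l then 1 else 0))"

definition dual_gate :: "gate \<Rightarrow> gate" where
  "dual_gate U = (\<lambda>i j k l. U j l i k)"

definition dual_unitary :: "nat \<Rightarrow> gate \<Rightarrow> bool" where
  "dual_unitary d U \<longleftrightarrow> unitary_gate d U \<and> unitary_gate d (dual_gate U)"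

definition circ :: "wlabel \<Rightarrow> complex" where
  "circ k = (if k 0 = k 1 \<and> k 2 = k 3 \<and> k 4 = k 5 \<and> k 6 = k 7 then 1 else 0)"

definition tri :: "wlabel \<Rightarrow> complex" where
  "tri k = (if k 0 = k 3 \<and> k 1 = k 2 \<and> k 4 = k 7 \<and> k 5 = k 6 then 1 else 0)"

definition cross :: "wlabel \<Rightarrow> complex" where
  "cross k = (if k 0 = k 7 \<and> k 1 = k 6 \<and> k 2 = k 5 \<and> k 3 = k 4 then 1 else 0)"

text \<open>Folded gate: <c,e|G_U|a,b> = prod over copies t of <c_t e_t|U^(t)|a_t b_t>,
  with U^(t) = U for odd copies (t = 0,2,4,6 zero-based) and conj U for even copies.\<close>
definition gateG :: "gate \<Rightarrow> wlabel \<Rightarrow> wlabel \<Rightarrow> wlabel \<Rightarrow> wlabel \<Rightarrow> complex" where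
  "gateG U c e a b = (\<Prod>t<8. (if even t then U (c t) (e t) (a t) (b t)
                                 else cnj (U (c t) (e t) (a t) (b t))))"

text \<open>Rmat d Us x e a = <e_1..e_x|R_x|a_1..a_x>.\<close>
definition Rmat :: "nat \<Rightarrow> (nat \<Rightarrow> gate) \<Rightarrow> nat \<Rightarrow> mlabel \<Rightarrow> mlabel \<Rightarrow> complex" where
  "Rmat d Us x e a = (\<Sum>k\<in>PiE {0..x} (\<lambda>_. Wl d).
      tri (k 0) * (\<Prod>m\<in>{1..x}. gateG (Us m) (k (m - 1)) (e m) (a m) (k m)) * circ (k x))"

text \<open>Lmat d Us x b c = <b_1..b_x|L_x|c_1..c_x>.\<close>
definition Lmat :: "nat \<Rightarrow> (nat \<Rightarrow> gate) \<Rightarrow> nat \<Rightarrow> mlabel \<Rightarrow> mlabel \<Rightarrow> complex" where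
  "Lmat d Us x b c = (\<Sum>k\<in>PiE {0..x} (\<lambda>_. Wl d).
      circ (k 0) * (\<Prod>m\<in>{1..x}. gateG (Us m) (c m) (k m) (k (m - 1)) (b m)) * cross (k x))"

definition mat_vec :: "nat \<Rightarrow> nat \<Rightarrow> (mlabel \<Rightarrow> mlabel \<Rightarrow> complex) \<Rightarrow> (mlabel \<Rightarrow> complex) \<Rightarrow> mlabel \<Rightarrow> complex" where
  "mat_vec d x M v = (\<lambda>i. \<Sum>j\<in>Ml d x. M i j * v j)"

definition vec_mat :: "nat \<Rightarrow> nat \<Rightarrow> (mlabel \<Rightarrow> complex) \<Rightarrow> (mlabel \<Rightarrow> mlabel \<Rightarrow> complex) \<Rightarrow> mlabel \<Rightarrow> complex" where
  "vec_mat d x v M = (\<lambda>j. \<Sum>i\<in>Ml d x. v i * M i j)"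

definition prodvec :: "(wlabel \<Rightarrow> complex) \<Rightarrow> (wlabel \<Rightarrow> complex) \<Rightarrow> nat \<Rightarrow> nat \<Rightarrow> mlabel \<Rightarrow> complex" where
  "prodvec f g x y = (\<lambda>a. \<Prod>m\<in>{1..x}. if m \<le> y then f (a m) else g (a m))"

definition rvec :: "nat \<Rightarrow> nat \<Rightarrow> mlabel \<Rightarrow> complex" where
  "rvec x y = prodvec tri circ x y"

definition lvec :: "nat \<Rightarrow> nat \<Rightarrow> mlabel \<Rightarrow> complex" where
  "lvec x y = prodvec circ cross x y"

definition right_eig :: "nat \<Rightarrow> nat \<Rightarrow> (mlabel \<Rightarrow> mlabel \<Rightarrow> complex) \<Rightarrow> complex \<Rightarrow> (mlabel \<Rightarrow> complex) \<Rightarrow> bool" where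
  "right_eig d x M ev v \<longleftrightarrow> (\<forall>i\<in>Ml d x. mat_vec d x M v i = ev * v i)"

definition left_eig :: "nat \<Rightarrow> nat \<Rightarrow> (mlabel \<Rightarrow> mlabel \<Rightarrow> complex) \<Rightarrow> complex \<Rightarrow> (mlabel \<Rightarrow> complex) \<Rightarrow> bool" where
  "left_eig d x M ev v \<longleftrightarrow> (\<forall>j\<in>Ml d x. vec_mat d x v M j = ev * v j)"

definition lin_indep_family :: "nat \<Rightarrow> nat \<Rightarrow> (nat \<Rightarrow> mlabel \<Rightarrow> complex) \<Rightarrow> bool" where
  "lin_indep_family d x vs \<longleftrightarrow>
     (\<forall>c :: nat \<Rightarrow> complex. (\<forall>a\<in>Ml d x. (\<Sum>y\<le>x. c y * vs y a) = 0) \<longrightarrow> (\<forall>y\<le>x. c y = 0))"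

end

theory Submission
  imports Defs
begin


definition chainsum :: "'s set \<Rightarrow> nat \<Rightarrow> ('s \<Rightarrow> complex) \<Rightarrow> (nat \<Rightarrow> 's \<Rightarrow> 's \<Rightarrow> complex) \<Rightarrow> ('s \<Rightarrow> complex) \<Rightarrow> complex" where
  "chainsum S n \<alpha> H \<beta> = (\<Sum>k\<in>PiE {0..n} (\<lambda>_. S). \<alpha> (k 0) * (\<Prod>m\<in>{1..n}. H m (k (m - 1)) (k m)) * \<beta> (k n))"

lemma chainsum_0:
  "chainsum S 0 \<alpha> H \<beta> = (\<Sum>z\<in>S. \<alpha> z * \<beta> z)"
  unfolding chainsum_def
  by (rule sum.reindex_bij_witness[where i="\<lambda>z. (\<lambda>t. if t = 0 then z else undefined)" and j="\<lambda>k. k 0"])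
       (auto simp: PiE_def extensional_def)

lemma chainsum_Suc:
  assumes "finite S"
  shows "chainsum S (Suc n) \<alpha> H \<beta> = chainsum S n \<alpha> H (\<lambda>z. \<Sum>w\<in>S. H (Suc n) z w * \<beta> w)"
proof -
  let ?F = "\<lambda>g. \<alpha> (g 0) * (\<Prod>m\<in>{1..n}. H m (g (m - 1)) (g m))"
  have "chainsum S (Suc n) \<alpha> H \<beta> =
      (\<Sum>k\<in>PiE (insert (Suc n) {0..n}) (\<lambda>_. S). \<alpha> (k 0) * (\<Prod>m\<in>{1..Suc n}. H m (k (m - 1)) (k m)) * \<beta> (k (Suc n)))"
    unfolding chainsum_def by (simp add: atLeast0_atMost_Suc)
  also have "\<dots> = (\<Sum>(w,g)\<in>S \<times> PiE {0..n} (\<lambda>_. S). ?F g * H (Suc n) (g n) w * \<beta> w)"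
  proof (rule sum.reindex_bij_witness[where i="\<lambda>(w,g). g(Suc n := w)" and j="\<lambda>k. (k (Suc n), k(Suc n := undefined))"])
    fix k assume k: "k \<in> PiE (insert (Suc n) {0..n}) (\<lambda>_. S)"
    have p: "(\<Prod>m\<in>{1..Suc n}. H m (k (m - 1)) (k m)) = H (Suc n) (k n) (k (Suc n)) * (\<Prod>m\<in>{1..n}. H m (k (m - 1)) (k m))"
      by (subst prod.nat_ivl_Suc') auto
    have q: "(\<Prod>m\<in>{1..n}. H m ((k(Suc n := undefined)) (m - 1)) ((k(Suc n := undefined)) m)) = (\<Prod>m\<in>{1..n}. H m (k (m - 1)) (k m))"
      by (rule prod.cong) auto
    show "(case (k (Suc n), k(Suc n := undefined)) of (w, g) \<Rightarrow> ?F g * H (Suc n) (g n) w * \<beta> w) =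
      \<alpha> (k 0) * (\<Prod>m\<in>{1..Suc n}. H m (k (m - 1)) (k m)) * \<beta> (k (Suc n))"
      using p q by (simp add: mult_ac)
  qed (auto simp: PiE_def extensional_def)
  also have "\<dots> = (\<Sum>w\<in>S. \<Sum>g\<in>PiE {0..n} (\<lambda>_. S). ?F g * H (Suc n) (g n) w * \<beta> w)"
    by (simp add: sum.cartesian_product)
  also have "\<dots> = (\<Sum>g\<in>PiE {0..n} (\<lambda>_. S). \<Sum>w\<in>S. ?F g * H (Suc n) (g n) w * \<beta> w)"
    by (rule sum.swap)
  also have "\<dots> = chainsum S n \<alpha> H (\<lambda>z. \<Sum>w\<in>S. H (Suc n) z w * \<beta> w)"
    unfolding chainsum_def by (intro sum.cong refl) (simp only: sum_distrib_left mult.assoc)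
  finally show ?thesis .
qed

lemma chainsum_cong:
  assumes "\<And>z. z \<in> S \<Longrightarrow> \<beta> z = \<beta>' z"
  shows "chainsum S n \<alpha> H \<beta> = chainsum S n \<alpha> H \<beta>'"
  unfolding chainsum_def using assms by (intro sum.cong) (auto simp: PiE_def Pi_def)

lemma chainsum_scale:
  "chainsum S n \<alpha> H (\<lambda>z. c * \<beta> z) = c * chainsum S n \<alpha> H \<beta>"
  unfolding chainsum_def by (simp add: sum_distrib_left mult_ac)

lemma chainsum_fw:
  assumes "finite S"
    and "\<And>m z. m \<in> {1..j} \<Longrightarrow> z \<in> S \<Longrightarrow> (\<Sum>z'\<in>S. \<sigma> z' * H m z' z) = u m * \<sigma> z"
  shows "chainsum S j \<sigma> H \<gamma> = (\<Prod>m\<in>{1..j}. u m) * (\<Sum>z\<in>S. \<sigma> z * \<gamma> z)"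
  using assms(2)
proof (induction j arbitrary: \<gamma>)
  case 0
  then show ?case by (simp add: chainsum_0)
next
  case (Suc j)
  have "chainsum S (Suc j) \<sigma> H \<gamma> = chainsum S j \<sigma> H (\<lambda>z. \<Sum>w\<in>S. H (Suc j) z w * \<gamma> w)"
    by (rule chainsum_Suc[OF assms(1)])
  also have "\<dots> = (\<Prod>m\<in>{1..j}. u m) * (\<Sum>z\<in>S. \<sigma> z * (\<Sum>w\<in>S. H (Suc j) z w * \<gamma> w))"
    using Suc by auto
  also have "(\<Sum>z\<in>S. \<sigma> z * (\<Sum>w\<in>S. H (Suc j) z w * \<gamma> w)) = (\<Sum>z\<in>S. \<Sum>w\<in>S. \<sigma> z * (H (Suc j) z w * \<gamma> w))"
    by (simp only: sum_distrib_left)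
  also have "\<dots> = (\<Sum>w\<in>S. \<Sum>z\<in>S. \<sigma> z * (H (Suc j) z w * \<gamma> w))"
    by (rule sum.swap)
  also have "\<dots> = (\<Sum>w\<in>S. (\<Sum>z\<in>S. \<sigma> z * H (Suc j) z w) * \<gamma> w)"
    by (simp only: sum_distrib_right mult.assoc)
  also have "\<dots> = (\<Sum>w\<in>S. u (Suc j) * (\<sigma> w * \<gamma> w))"
    using Suc.prems by (intro sum.cong) auto
  also have "\<dots> = u (Suc j) * (\<Sum>w\<in>S. \<sigma> w * \<gamma> w)"
    by (simp only: sum_distrib_left)
  finally show ?case
    by (simp only: prod.nat_ivl_Suc'[of 1 j] le_SucI mult.assoc mult.commute[of "u (Suc j)"])
qed

lemma chainsum_bw:
  assumes "finite S" "j \<le> n"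
    and "\<And>m z. m \<in> {Suc j..n} \<Longrightarrow> z \<in> S \<Longrightarrow> (\<Sum>w\<in>S. H m z w * \<tau> w) = u m * \<tau> z"
  shows "chainsum S n \<sigma> H \<tau> = (\<Prod>m\<in>{Suc j..n}. u m) * chainsum S j \<sigma> H \<tau>"
  using assms(2,3)
proof (induction n rule: dec_induct)
  case base
  then show ?case by simp
next
  case (step n)
  have "chainsum S (Suc n) \<sigma> H \<tau> = chainsum S n \<sigma> H (\<lambda>z. \<Sum>w\<in>S. H (Suc n) z w * \<tau> w)"
    by (rule chainsum_Suc[OF assms(1)])
  also have "\<dots> = chainsum S n \<sigma> H (\<lambda>z. u (Suc n) * \<tau> z)"
    using step.prems step.hyps by (intro chainsum_cong) auto
  also have "\<dots> = u (Suc n) * chainsum S n \<sigma> H \<tau>"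
    by (rule chainsum_scale)
  also have "\<dots> = u (Suc n) * ((\<Prod>m\<in>{Suc j..n}. u m) * chainsum S j \<sigma> H \<tau>)"
    using step by auto
  moreover have "(\<Prod>m\<in>{Suc j..Suc n}. u m) = u (Suc n) * (\<Prod>m\<in>{Suc j..n}. u m)"
    using step.hyps by (intro prod.nat_ivl_Suc') simp
  ultimately show ?case by (simp only: mult.assoc)
qed

lemma chainsum_eval:
  assumes "finite S" "y \<le> n"
    and "\<And>m z. m \<in> {1..y} \<Longrightarrow> z \<in> S \<Longrightarrow> (\<Sum>z'\<in>S. \<sigma> z' * H m z' z) = u m * \<sigma> z"
    and "\<And>m z. m \<in> {Suc y..n} \<Longrightarrow> z \<in> S \<Longrightarrow> (\<Sum>w\<in>S. H m z w * \<tau> w) = u m * \<tau> z"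
  shows "chainsum S n \<sigma> H \<tau> = (\<Prod>m\<in>{1..n}. u m) * (\<Sum>z\<in>S. \<sigma> z * \<tau> z)"
proof -
  have "chainsum S n \<sigma> H \<tau> = (\<Prod>m\<in>{Suc y..n}. u m) * ((\<Prod>m\<in>{1..y}. u m) * (\<Sum>z\<in>S. \<sigma> z * \<tau> z))"
    using chainsum_bw[OF assms(1,2) assms(4)] chainsum_fw[OF assms(1) assms(3)] by simp
  also have "(\<Prod>m\<in>{1..n}. u m) = (\<Prod>m\<in>{1..y}. u m) * (\<Prod>m\<in>{Suc y..n}. u m)"
  proof -
    have "{1..n} = {1..y} \<union> {Suc y..n}" using assms(2) by auto
    thus ?thesis by (simp add: prod.union_disjoint)
  qed
  ultimately show ?thesis by (simp add: mult_ac)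
qed

lemma chain_contract:
  fixes A :: "'k \<Rightarrow> complex"
  assumes "finite S" "finite I"
  shows "(\<Sum>a\<in>PiE I (\<lambda>_. S). (\<Sum>k\<in>K. A k * (\<Prod>m\<in>I. P m k (a m))) * (\<Prod>m\<in>I. Q m (a m)))
       = (\<Sum>k\<in>K. A k * (\<Prod>m\<in>I. \<Sum>s\<in>S. P m k s * Q m s))"
proof -
  have "(\<Sum>a\<in>PiE I (\<lambda>_. S). (\<Sum>k\<in>K. A k * (\<Prod>m\<in>I. P m k (a m))) * (\<Prod>m\<in>I. Q m (a m)))
     = (\<Sum>k\<in>K. A k * (\<Sum>a\<in>PiE I (\<lambda>_. S). (\<Prod>m\<in>I. P m k (a m) * Q m (a m))))"
  proof -
    have "(\<Sum>a\<in>PiE I (\<lambda>_. S). (\<Sum>k\<in>K. A k * (\<Prod>m\<in>I. P m k (a m))) * (\<Prod>m\<in>I. Q m (a m)))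
      = (\<Sum>a\<in>PiE I (\<lambda>_. S). \<Sum>k\<in>K. A k * (\<Prod>m\<in>I. P m k (a m) * Q m (a m)))"
    proof (rule sum.cong[OF refl])
      fix a
      have "(\<Sum>k\<in>K. A k * (\<Prod>m\<in>I. P m k (a m))) * (\<Prod>m\<in>I. Q m (a m)) = (\<Sum>k\<in>K. A k * (\<Prod>m\<in>I. P m k (a m)) * (\<Prod>m\<in>I. Q m (a m)))"
        by (rule sum_distrib_right)
      also have "\<dots> = (\<Sum>k\<in>K. A k * (\<Prod>m\<in>I. P m k (a m) * Q m (a m)))"
        by (intro sum.cong refl) (simp add: prod.distrib)
      finally show "(\<Sum>k\<in>K. A k * (\<Prod>m\<in>I. P m k (a m))) * (\<Prod>m\<in>I. Q m (a m)) = (\<Sum>k\<in>K. A k * (\<Prod>m\<in>I. P m k (a m) * Q m (a m)))" .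
    qed
    also have "\<dots> = (\<Sum>k\<in>K. \<Sum>a\<in>PiE I (\<lambda>_. S). A k * (\<Prod>m\<in>I. P m k (a m) * Q m (a m)))"
      by (rule sum.swap)
    finally show ?thesis by (simp add: sum_distrib_left)
  qed
  also have "\<dots> = (\<Sum>k\<in>K. A k * (\<Prod>m\<in>I. \<Sum>s\<in>S. P m k s * Q m s))"
  proof (rule sum.cong[OF refl])
    fix k
    show "A k * (\<Sum>a\<in>PiE I (\<lambda>_. S). \<Prod>m\<in>I. P m k (a m) * Q m (a m)) = A k * (\<Prod>m\<in>I. \<Sum>s\<in>S. P m k s * Q m s)"
      using prod_sum_PiE[where A=I and B="\<lambda>_. S" and f="\<lambda>m s. P m k s * Q m s"] assms by simp
  qed
  finally show ?thesis .
qed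




definition pairf :: "(nat \<Rightarrow> nat) \<Rightarrow> wlabel \<Rightarrow> complex" where
  "pairf p k = (\<Prod>t\<in>{0,2,4,6}. if k t = k (p t) then 1 else 0)"

definition pairing :: "(nat \<Rightarrow> nat) \<Rightarrow> (nat \<Rightarrow> nat) \<Rightarrow> bool" where
  "pairing p q \<longleftrightarrow> (\<forall>t\<in>{0,2,4,6}. p t \<in> {1,3,5,7} \<and> q (p t) = t) \<and>
                   (\<forall>t\<in>{1,3,5,7}. q t \<in> {0,2,4,6} \<and> p (q t) = t)"

lemma pairingD1:
  assumes "pairing p q" "t \<in> {0,2,4,6}"
  shows "p t \<in> {1,3,5,7} \<and> q (p t) = t"
proof -
  have "\<forall>t\<in>{0,2,4,6}. p t \<in> {1,3,5,7} \<and> q (p t) = t" using assms(1) unfolding pairing_def by (rule conjunct1)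
  then show ?thesis using assms(2) by (rule bspec)
qed

lemma pairingD2:
  assumes "pairing p q" "t \<in> {1,3,5,7}"
  shows "q t \<in> {0,2,4,6} \<and> p (q t) = t"
proof -
  have "\<forall>t\<in>{1,3,5,7}. q t \<in> {0,2,4,6} \<and> p (q t) = t" using assms(1) unfolding pairing_def by (rule conjunct2)
  then show ?thesis using assms(2) by (rule bspec)
qed

lemma lt8: "(t::nat) < 8 \<longleftrightarrow> t \<in> {0,2,4,6} \<or> t \<in> {1,3,5,7}"
  by auto

lemma prod_ind:
  assumes "finite A"
  shows "(\<Prod>t\<in>A. if P t then (1::complex) else 0) = (if \<forall>t\<in>A. P t then 1 else 0)"
  using assms by (induction A rule: finite_induct) auto

lemma pairf_if: "pairf p k = (if \<forall>t\<in>{0,2,4,6}. k t = k (p t) then 1 else 0)"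
  unfolding pairf_def by (rule prod_ind) simp

definition extf :: "(nat \<Rightarrow> nat) \<Rightarrow> (nat \<Rightarrow> nat) \<Rightarrow> nat \<Rightarrow> nat" where
  "extf q \<alpha> = (\<lambda>t. if t \<in> {0,2,4,6} then \<alpha> t else if t \<in> {1,3,5,7} then \<alpha> (q t) else undefined)"

definition goodset :: "(nat \<Rightarrow> nat) \<Rightarrow> nat \<Rightarrow> wlabel set" where
  "goodset p d = {a\<in>Wl d. \<forall>t\<in>{0,2,4,6}. a t = a (p t)}"

lemma ext_restrict:
  assumes pq: "pairing p q" and a: "a \<in> goodset p d"
  shows "extf q (restrict a {0,2,4,6}) = a"
proof
  fix t
  have aW: "a \<in> PiE {..<8} (\<lambda>_. {..<d})" using a unfolding goodset_def Wl_def by simp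
  have ag: "\<forall>t\<in>{0,2,4,6}. a t = a (p t)" using a unfolding goodset_def by simp
  show "extf q (restrict a {0,2,4,6}) t = a t"
  proof (cases "t \<in> {0,2,4,6}")
    case True then show ?thesis by (simp add: extf_def)
  next
    case False
    show ?thesis
    proof (cases "t \<in> {1,3,5,7}")
      case True
      have qt: "q t \<in> {0,2,4,6} \<and> p (q t) = t" by (rule pairingD2[OF pq True])
      have "a (q t) = a (p (q t))" using ag qt by (intro bspec[OF ag]) simp
      then have "a (q t) = a t" using qt by simp
      then show ?thesis using False True qt by (simp add: extf_def)
    next
      case False2: False
      then have "t \<notin> {..<8}" using False lt8[of t] by simp
      then have "a t = undefined" using aW by (simp add: PiE_def extensional_def)
      then show ?thesis using False False2 by (simp add: extf_def)
    qed
  qed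
qed

lemma restrict_in:
  assumes a: "a \<in> goodset p d"
  shows "restrict a {0,2,4,6} \<in> PiE {0,2,4,6} (\<lambda>_. {..<d})"
proof (rule PiE_I)
  have aW: "a \<in> PiE {..<8} (\<lambda>_. {..<d})" using a unfolding goodset_def Wl_def by simp
  fix t assume t: "t \<in> {0,2,4,6::nat}"
  then have "t \<in> {..<8}" by auto
  then have "a t \<in> {..<d}" by (rule PiE_mem[OF aW])
  then show "restrict a {0,2,4,6} t \<in> {..<d}" using t by simp
qed simp

lemma restrict_ext:
  fixes \<alpha> :: "nat \<Rightarrow> nat"
  assumes al: "\<alpha> \<in> PiE {0,2,4,6} (\<lambda>_. {..<d})"
  shows "restrict (extf q \<alpha>) {0,2,4,6} = \<alpha>"
proof
  fix t
  show "restrict (extf q \<alpha>) {0,2,4,6} t = \<alpha> t"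
  proof (cases "t \<in> {0,2,4,6}")
    case True then show ?thesis by (simp add: extf_def)
  next
    case False then show ?thesis using al by (simp add: PiE_def extensional_def)
  qed
qed

lemma ext_in:
  assumes pq: "pairing p q" and al: "\<alpha> \<in> PiE {0,2,4,6} (\<lambda>_. {..<d})"
  shows "extf q \<alpha> \<in> goodset p d"
  unfolding goodset_def
proof (intro CollectI conjI ballI)
  show "extf q \<alpha> \<in> Wl d"
    unfolding Wl_def
  proof (rule PiE_I)
    fix t assume t8: "t \<in> {..<8::nat}"
    show "extf q \<alpha> t \<in> {..<d}"
    proof (cases "t \<in> {0,2,4,6}")
      case True then show ?thesis using PiE_mem[OF al True] by (simp add: extf_def)
    next
      case False
      then have tO: "t \<in> {1,3,5,7}" using t8 lt8[of t] by simp
      then have "q t \<in> {0,2,4,6}" using pairingD2[OF pq tO] by simp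
      then have "\<alpha> (q t) \<in> {..<d}" by (rule PiE_mem[OF al])
      then show ?thesis using False tO by (simp add: extf_def)
    qed
  next
    fix t assume "t \<notin> {..<8::nat}"
    then have "t \<notin> {0,2,4,6}" "t \<notin> {1,3,5,7}" by auto
    then show "extf q \<alpha> t = undefined" by (simp add: extf_def)
  qed
next
  fix t assume t: "t \<in> {0,2,4,6::nat}"
  have pt: "p t \<in> {1,3,5,7} \<and> q (p t) = t" by (rule pairingD1[OF pq t])
  have "p t \<notin> {0,2,4,6}" using pt by auto
  then show "extf q \<alpha> t = extf q \<alpha> (p t)"
    using pt t by (simp add: extf_def)
qed

lemma ext_val:
  fixes t :: nat
  assumes pq: "pairing p q" and t: "t \<in> {0,2,4,6}"
  shows "extf q \<alpha> t = \<alpha> t" "extf q \<alpha> (p t) = \<alpha> t"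
proof -
  have pt: "p t \<in> {1,3,5,7} \<and> q (p t) = t" by (rule pairingD1[OF pq t])
  have "p t \<notin> {0,2,4,6}" using pt by auto
  then show "extf q \<alpha> t = \<alpha> t" "extf q \<alpha> (p t) = \<alpha> t" using pt t by (simp_all add: extf_def)
qed

lemma pair_sum1:
  assumes pq: "pairing p q"
  shows "(\<Sum>a\<in>Wl d. pairf p a * (\<Prod>t\<in>{0,2,4,6}. g t (a t) (a (p t))))
       = (\<Prod>t\<in>{0,2,4,6::nat}. \<Sum>i<d. g t i i)"
proof -
  have fin: "finite (Wl d)" unfolding Wl_def by (simp add: finite_PiE)
  have "(\<Sum>a\<in>Wl d. pairf p a * (\<Prod>t\<in>{0,2,4,6}. g t (a t) (a (p t))))
      = (\<Sum>a\<in>Wl d. if \<forall>t\<in>{0,2,4,6}. a t = a (p t) then (\<Prod>t\<in>{0,2,4,6}. g t (a t) (a (p t))) else 0)"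
    by (intro sum.cong refl) (simp only: pairf_if mult_1 mult_zero_left if_distrib[of "\<lambda>x. x * _"])
  also have "\<dots> = (\<Sum>a\<in>goodset p d. \<Prod>t\<in>{0,2,4,6}. g t (a t) (a (p t)))"
    unfolding goodset_def by (rule sum.inter_filter[OF fin, symmetric])
  also have "\<dots> = (\<Sum>\<alpha>\<in>PiE {0,2,4,6::nat} (\<lambda>_. {..<d}). \<Prod>t\<in>{0,2,4,6}. g t (\<alpha> t) (\<alpha> t))"
  proof (rule sum.reindex_bij_witness[where j="\<lambda>a. restrict a {0,2,4,6}" and i="extf q"])
    fix a assume a: "a \<in> goodset p d"
    show "extf q (restrict a {0,2,4,6}) = a" by (rule ext_restrict[OF pq a])
    show "restrict a {0,2,4,6} \<in> PiE {0,2,4,6::nat} (\<lambda>_. {..<d})" by (rule restrict_in[OF a])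
    show "(\<Prod>t\<in>{0,2,4,6}. g t (restrict a {0,2,4,6} t) (restrict a {0,2,4,6} t)) = (\<Prod>t\<in>{0,2,4,6}. g t (a t) (a (p t)))"
    proof (rule prod.cong[OF refl])
      fix t assume t: "t \<in> {0,2,4,6::nat}"
      have "\<forall>t\<in>{0,2,4,6::nat}. a t = a (p t)" using a unfolding goodset_def by simp
      then have "a t = a (p t)" using t by (rule bspec)
      then show "g t (restrict a {0,2,4,6} t) (restrict a {0,2,4,6} t) = g t (a t) (a (p t))" using t by simp
    qed
  next
    fix \<alpha> assume al: "\<alpha> \<in> PiE {0,2,4,6::nat} (\<lambda>_. {..<d})"
    show "restrict (extf q \<alpha>) {0,2,4,6} = \<alpha>" by (rule restrict_ext[OF al])
    show "extf q \<alpha> \<in> goodset p d" by (rule ext_in[OF pq al])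
  qed
  also have "\<dots> = (\<Prod>t\<in>{0,2,4,6::nat}. \<Sum>i<d. g t i i)"
    by (rule prod_sum_PiE[symmetric]) auto
  finally show ?thesis .
qed

lemma prod8_split:
  assumes pq: "pairing p q"
  shows "(\<Prod>t<8. f t) = (\<Prod>t\<in>{0,2,4,6::nat}. f t * f (p t))"
proof -
  let ?E = "{0,2,4,6::nat}" and ?O = "{1,3,5,7::nat}"
  have pE: "\<And>t. t \<in> ?E \<Longrightarrow> p t \<in> ?O \<and> q (p t) = t" by (rule pairingD1[OF pq])
  have qO: "\<And>t. t \<in> ?O \<Longrightarrow> q t \<in> ?E \<and> p (q t) = t" by (rule pairingD2[OF pq])
  have img: "p ` ?E = ?O"
  proof
    show "p ` ?E \<subseteq> ?O" proof (rule image_subsetI) fix t assume "t \<in> ?E" then show "p t \<in> ?O" using pE by simp qed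
    show "?O \<subseteq> p ` ?E"
    proof
      fix t assume "t \<in> ?O"
      then have "q t \<in> ?E" "p (q t) = t" using qO by simp_all
      then show "t \<in> p ` ?E" by (metis imageI)
    qed
  qed
  have inj: "inj_on p ?E"
  proof (rule inj_onI)
    fix s t assume st: "s \<in> ?E" "t \<in> ?E" "p s = p t"
    have "s = q (p s)" using pE[OF st(1)] by simp
    also have "\<dots> = q (p t)" using st(3) by simp
    also have "\<dots> = t" using pE[OF st(2)] by simp
    finally show "s = t" .
  qed
  have u: "{..<8::nat} = ?E \<union> ?O" by auto
  have "(\<Prod>t<8. f t) = (\<Prod>t\<in>?E \<union> ?O. f t)" by (simp only: u)
  also have "\<dots> = (\<Prod>t\<in>?E. f t) * (\<Prod>t\<in>?O. f t)"
    by (rule prod.union_disjoint) auto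
  also have "(\<Prod>t\<in>?O. f t) = (\<Prod>t\<in>?E. f (p t))"
    using prod.reindex[OF inj, of f] img by simp
  finally show ?thesis by (simp add: prod.distrib)
qed



lemma pair_sum2:
  assumes pq: "pairing p q"
  shows "(\<Sum>a\<in>Wl d. \<Sum>b\<in>Wl d. pairf p a * pairf p b * (\<Prod>t<8. h t (a t) (b t)))
       = (\<Prod>t\<in>{0,2,4,6::nat}. \<Sum>i<d. \<Sum>j<d. h t i j * h (p t) i j)"
proof -
  have "(\<Sum>a\<in>Wl d. \<Sum>b\<in>Wl d. pairf p a * pairf p b * (\<Prod>t<8. h t (a t) (b t)))
      = (\<Sum>a\<in>Wl d. pairf p a * (\<Sum>b\<in>Wl d. pairf p b * (\<Prod>t\<in>{0,2,4,6}. h t (a t) (b t) * h (p t) (a (p t)) (b (p t)))))"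
    by (simp add: prod8_split[OF pq] sum_distrib_left mult.assoc)
  also have "\<dots> = (\<Sum>a\<in>Wl d. pairf p a * (\<Prod>t\<in>{0,2,4,6}. \<Sum>j<d. h t (a t) j * h (p t) (a (p t)) j))"
    using pair_sum1[OF pq, where d=d and g="\<lambda>t j j'. h t (a t) j * h (p t) (a (p t)) j'" for a] by simp
  also have "\<dots> = (\<Prod>t\<in>{0,2,4,6::nat}. \<Sum>i<d. \<Sum>j<d. h t i j * h (p t) i j)"
    using pair_sum1[OF pq, where d=d and g="\<lambda>t i i'. \<Sum>j<d. h t i j * h (p t) i' j"] by simp
  finally show ?thesis .
qed




lemma Wl_lt: "c \<in> Wl d \<Longrightarrow> t < 8 \<Longrightarrow> c t < d"
  unfolding Wl_def using PiE_mem by fastforce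

lemma E_even: "t \<in> {0,2,4,6::nat} \<Longrightarrow> even t" by auto
lemma O_odd: "t \<in> {1,3,5,7::nat} \<Longrightarrow> odd t" by auto
lemma E_lt8: "t \<in> {0,2,4,6::nat} \<Longrightarrow> t < 8" by auto
lemma O_lt8: "t \<in> {1,3,5,7::nat} \<Longrightarrow> t < 8" by auto

lemma prod_pairs:
  "(\<Prod>t\<in>{0,2,4,6::nat}. if x t = x (p t) \<and> y t = y (p t) then (1::complex) else 0) = pairf p x * pairf p y"
  unfolding pairf_def prod.distrib[symmetric] by (intro prod.cong refl) simp

lemma gate_U1:
  assumes U: "unitary_gate d U" and pq: "pairing p q" and c: "c \<in> Wl d" and e: "e \<in> Wl d"
  shows "(\<Sum>a\<in>Wl d. \<Sum>b\<in>Wl d. pairf p a * pairf p b * gateG U c e a b) = pairf p c * pairf p e"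
proof -
  define h where "h = (\<lambda>t i j. if even t then U (c t) (e t) i j else cnj (U (c t) (e t) i j))"
  have "(\<Sum>a\<in>Wl d. \<Sum>b\<in>Wl d. pairf p a * pairf p b * gateG U c e a b)
      = (\<Sum>a\<in>Wl d. \<Sum>b\<in>Wl d. pairf p a * pairf p b * (\<Prod>t<8. h t (a t) (b t)))"
    unfolding gateG_def h_def by simp
  also have "\<dots> = (\<Prod>t\<in>{0,2,4,6::nat}. \<Sum>i<d. \<Sum>j<d. h t i j * h (p t) i j)"
    by (rule pair_sum2[OF pq])
  also have "\<dots> = (\<Prod>t\<in>{0,2,4,6::nat}. if c t = c (p t) \<and> e t = e (p t) then 1 else 0)"
  proof (rule prod.cong[OF refl])
    fix t assume t: "t \<in> {0,2,4,6::nat}"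
    have pt: "p t \<in> {1,3,5,7}" using pairingD1[OF pq t] by simp
    have l: "c t < d" "e t < d" "c (p t) < d" "e (p t) < d"
      using Wl_lt[OF c] Wl_lt[OF e] E_lt8[OF t] O_lt8[OF pt] by auto
    have "\<forall>i<d. \<forall>j<d. \<forall>k<d. \<forall>l<d.
        (\<Sum>p<d. \<Sum>q<d. U i j p q * cnj (U k l p q)) = (if i = k \<and> j = l then 1 else 0)"
      using U unfolding unitary_gate_def by blast
    then have "(\<Sum>i<d. \<Sum>j<d. U (c t) (e t) i j * cnj (U (c (p t)) (e (p t)) i j)) = (if c t = c (p t) \<and> e t = e (p t) then 1 else 0)"
      using l by blast
    then show "(\<Sum>i<d. \<Sum>j<d. h t i j * h (p t) i j) = (if c t = c (p t) \<and> e t = e (p t) then 1 else 0)"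
      using E_even[OF t] O_odd[OF pt] unfolding h_def by simp
  qed
  also have "\<dots> = pairf p c * pairf p e" by (rule prod_pairs)
  finally show ?thesis .
qed

lemma gate_U2:
  assumes U: "unitary_gate d U" and pq: "pairing p q" and a: "a \<in> Wl d" and b: "b \<in> Wl d"
  shows "(\<Sum>c\<in>Wl d. \<Sum>e\<in>Wl d. pairf p c * pairf p e * gateG U c e a b) = pairf p a * pairf p b"
proof -
  define h where "h = (\<lambda>t i j. if even t then U i j (a t) (b t) else cnj (U i j (a t) (b t)))"
  have "(\<Sum>c\<in>Wl d. \<Sum>e\<in>Wl d. pairf p c * pairf p e * gateG U c e a b)
      = (\<Sum>c\<in>Wl d. \<Sum>e\<in>Wl d. pairf p c * pairf p e * (\<Prod>t<8. h t (c t) (e t)))"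
    unfolding gateG_def h_def by simp
  also have "\<dots> = (\<Prod>t\<in>{0,2,4,6::nat}. \<Sum>i<d. \<Sum>j<d. h t i j * h (p t) i j)"
    by (rule pair_sum2[OF pq])
  also have "\<dots> = (\<Prod>t\<in>{0,2,4,6::nat}. if a t = a (p t) \<and> b t = b (p t) then 1 else 0)"
  proof (rule prod.cong[OF refl])
    fix t assume t: "t \<in> {0,2,4,6::nat}"
    have pt: "p t \<in> {1,3,5,7}" using pairingD1[OF pq t] by simp
    have l: "a t < d" "b t < d" "a (p t) < d" "b (p t) < d"
      using Wl_lt[OF a] Wl_lt[OF b] E_lt8[OF t] O_lt8[OF pt] by auto
    have "\<forall>i<d. \<forall>j<d. \<forall>k<d. \<forall>l<d.
        (\<Sum>p<d. \<Sum>q<d. cnj (U p q i j) * U p q k l) = (if i = k \<and> j = l then 1 else 0)"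
      using U unfolding unitary_gate_def by blast
    then have "(\<Sum>i<d. \<Sum>j<d. cnj (U i j (a (p t)) (b (p t))) * U i j (a t) (b t)) = (if a (p t) = a t \<and> b (p t) = b t then 1 else 0)"
      using l by blast
    then show "(\<Sum>i<d. \<Sum>j<d. h t i j * h (p t) i j) = (if a t = a (p t) \<and> b t = b (p t) then 1 else 0)"
      using E_even[OF t] O_odd[OF pt] unfolding h_def by (simp add: mult.commute eq_commute)
  qed
  also have "\<dots> = pairf p a * pairf p b" by (rule prod_pairs)
  finally show ?thesis .
qed

lemma gate_D1:
  assumes U: "unitary_gate d (dual_gate U)" and pq: "pairing p q" and e: "e \<in> Wl d" and b: "b \<in> Wl d"
  shows "(\<Sum>a\<in>Wl d. \<Sum>c\<in>Wl d. pairf p a * pairf p c * gateG U c e a b) = pairf p b * pairf p e"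
proof -
  define h where "h = (\<lambda>t i j. if even t then U j (e t) i (b t) else cnj (U j (e t) i (b t)))"
  have "(\<Sum>a\<in>Wl d. \<Sum>c\<in>Wl d. pairf p a * pairf p c * gateG U c e a b)
      = (\<Sum>a\<in>Wl d. \<Sum>c\<in>Wl d. pairf p a * pairf p c * (\<Prod>t<8. h t (a t) (c t)))"
    unfolding gateG_def h_def by simp
  also have "\<dots> = (\<Prod>t\<in>{0,2,4,6::nat}. \<Sum>i<d. \<Sum>j<d. h t i j * h (p t) i j)"
    by (rule pair_sum2[OF pq])
  also have "\<dots> = (\<Prod>t\<in>{0,2,4,6::nat}. if b t = b (p t) \<and> e t = e (p t) then 1 else 0)"
  proof (rule prod.cong[OF refl])
    fix t assume t: "t \<in> {0,2,4,6::nat}"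
    have pt: "p t \<in> {1,3,5,7}" using pairingD1[OF pq t] by simp
    have l: "b t < d" "e t < d" "b (p t) < d" "e (p t) < d"
      using Wl_lt[OF b] Wl_lt[OF e] E_lt8[OF t] O_lt8[OF pt] by auto
    have "\<forall>i<d. \<forall>j<d. \<forall>k<d. \<forall>l<d.
        (\<Sum>p<d. \<Sum>q<d. cnj (dual_gate U p q i j) * dual_gate U p q k l) = (if i = k \<and> j = l then 1 else 0)"
      using U unfolding unitary_gate_def by blast
    then have "(\<Sum>i<d. \<Sum>j<d. cnj (dual_gate U i j (b (p t)) (e (p t))) * dual_gate U i j (b t) (e t)) = (if b (p t) = b t \<and> e (p t) = e t then 1 else 0)"
      using l by blast
    then show "(\<Sum>i<d. \<Sum>j<d. h t i j * h (p t) i j) = (if b t = b (p t) \<and> e t = e (p t) then 1 else 0)"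
      using E_even[OF t] O_odd[OF pt] unfolding h_def dual_gate_def by (simp add: mult.commute eq_commute)
  qed
  also have "\<dots> = pairf p b * pairf p e" by (rule prod_pairs)
  finally show ?thesis .
qed

lemma gate_D2:
  assumes U: "unitary_gate d (dual_gate U)" and pq: "pairing p q" and c: "c \<in> Wl d" and a: "a \<in> Wl d"
  shows "(\<Sum>b\<in>Wl d. \<Sum>e\<in>Wl d. pairf p b * pairf p e * gateG U c e a b) = pairf p a * pairf p c"
proof -
  define h where "h = (\<lambda>t i j. if even t then U (c t) j (a t) i else cnj (U (c t) j (a t) i))"
  have "(\<Sum>b\<in>Wl d. \<Sum>e\<in>Wl d. pairf p b * pairf p e * gateG U c e a b)
      = (\<Sum>b\<in>Wl d. \<Sum>e\<in>Wl d. pairf p b * pairf p e * (\<Prod>t<8. h t (b t) (e t)))"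
    unfolding gateG_def h_def by simp
  also have "\<dots> = (\<Prod>t\<in>{0,2,4,6::nat}. \<Sum>i<d. \<Sum>j<d. h t i j * h (p t) i j)"
    by (rule pair_sum2[OF pq])
  also have "\<dots> = (\<Prod>t\<in>{0,2,4,6::nat}. if a t = a (p t) \<and> c t = c (p t) then 1 else 0)"
  proof (rule prod.cong[OF refl])
    fix t assume t: "t \<in> {0,2,4,6::nat}"
    have pt: "p t \<in> {1,3,5,7}" using pairingD1[OF pq t] by simp
    have l: "a t < d" "c t < d" "a (p t) < d" "c (p t) < d"
      using Wl_lt[OF a] Wl_lt[OF c] E_lt8[OF t] O_lt8[OF pt] by auto
    have "\<forall>i<d. \<forall>j<d. \<forall>k<d. \<forall>l<d.
        (\<Sum>p<d. \<Sum>q<d. dual_gate U i j p q * cnj (dual_gate U k l p q)) = (if i = k \<and> j = l then 1 else 0)"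
      using U unfolding unitary_gate_def by blast
    then have "(\<Sum>i<d. \<Sum>j<d. dual_gate U (a t) (c t) i j * cnj (dual_gate U (a (p t)) (c (p t)) i j)) = (if a t = a (p t) \<and> c t = c (p t) then 1 else 0)"
      using l by blast
    then show "(\<Sum>i<d. \<Sum>j<d. h t i j * h (p t) i j) = (if a t = a (p t) \<and> c t = c (p t) then 1 else 0)"
      using E_even[OF t] O_odd[OF pt] unfolding h_def dual_gate_def by simp
  qed
  also have "\<dots> = pairf p a * pairf p c" by (rule prod_pairs)
  finally show ?thesis .
qed




definition pc :: "nat \<Rightarrow> nat" where "pc t = t + 1"
definition qc :: "nat \<Rightarrow> nat" where "qc t = t - 1"
definition ptr :: "nat \<Rightarrow> nat" where "ptr t = (if t = 0 then 3 else if t = 2 then 1 else if t = 4 then 7 else 5)"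
definition qtr :: "nat \<Rightarrow> nat" where "qtr t = (if t = 3 then 0 else if t = 1 then 2 else if t = 7 then 4 else 6)"
definition px :: "nat \<Rightarrow> nat" where "px t = 7 - t"

lemma pairing_c: "pairing pc qc" unfolding pairing_def pc_def qc_def by simp
lemma pairing_t: "pairing ptr qtr" unfolding pairing_def ptr_def qtr_def by simp
lemma pairing_x: "pairing px px" unfolding pairing_def px_def by simp

lemma circ_pf: "circ = pairf pc"
  by (rule ext) (simp add: circ_def pairf_if pc_def)
lemma tri_pf: "tri = pairf ptr"
  by (rule ext) (simp add: tri_def pairf_if ptr_def conj_ac eq_commute)
lemma cross_pf: "cross = pairf px"
  by (rule ext) (simp add: cross_def pairf_if px_def conj_ac eq_commute)

lemma count_two:
  fixes f :: "nat \<Rightarrow> nat \<Rightarrow> wlabel" and Q :: "wlabel \<Rightarrow> bool"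
  assumes inv1: "\<And>z. z \<in> Wl d \<Longrightarrow> Q z \<Longrightarrow> f (z ia) (z ja) = z"
    and inv2: "\<And>i j. i < d \<Longrightarrow> j < d \<Longrightarrow> f i j \<in> Wl d \<and> Q (f i j) \<and> f i j ia = i \<and> f i j ja = j"
    and ia: "ia < 8" and ja: "ja < 8"
  shows "(\<Sum>z\<in>Wl d. if Q z then (1::complex) else 0) = of_nat (d^2)"
proof -
  have fin: "finite (Wl d)" unfolding Wl_def by (simp add: finite_PiE)
  have "(\<Sum>z\<in>Wl d. if Q z then (1::complex) else 0) = (\<Sum>z\<in>{z\<in>Wl d. Q z}. 1)"
    by (rule sum.inter_filter[OF fin, symmetric])
  also have "\<dots> = (\<Sum>ij\<in>{..<d} \<times> {..<d}. (1::complex))"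
  proof (rule sum.reindex_bij_witness[of _ "\<lambda>(i,j). f i j" "\<lambda>z. (z ia, z ja)"])
    fix z assume z: "z \<in> {z\<in>Wl d. Q z}"
    show "(case (z ia, z ja) of (i, j) \<Rightarrow> f i j) = z" using inv1 z by simp
    show "(z ia, z ja) \<in> {..<d} \<times> {..<d}" using z Wl_lt[of z d] ia ja by simp
  next
    fix ij assume ij: "ij \<in> {..<d} \<times> {..<d}"
    then obtain i j where ij': "ij = (i, j)" "i < d" "j < d" by auto
    show "(case ij of (i, j) \<Rightarrow> f i j) \<in> {z \<in> Wl d. Q z}" using inv2[OF ij'(2,3)] ij'(1) by simp
    show "((case ij of (i, j) \<Rightarrow> f i j) ia, (case ij of (i, j) \<Rightarrow> f i j) ja) = ij"
      using inv2[OF ij'(2,3)] ij'(1) by simp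
  qed simp
  also have "\<dots> = of_nat (d^2)" by (simp add: power2_eq_square)
  finally show ?thesis .
qed

lemma lt8_cases: "(t::nat) < 8 \<Longrightarrow> t = 0 \<or> t = 1 \<or> t = 2 \<or> t = 3 \<or> t = 4 \<or> t = 5 \<or> t = 6 \<or> t = 7"
  by auto

lemma Wl_undef: "z \<in> Wl d \<Longrightarrow> \<not> t < 8 \<Longrightarrow> z t = undefined"
  unfolding Wl_def by (simp add: PiE_def extensional_def)

lemma Wl_I: "(\<And>t. t < 8 \<Longrightarrow> z t < d) \<Longrightarrow> (\<And>t. \<not> t < 8 \<Longrightarrow> z t = undefined) \<Longrightarrow> z \<in> Wl d"
  unfolding Wl_def by (rule PiE_I) auto




lemma end_tri_circ: "(\<Sum>z\<in>Wl d. tri z * circ z) = of_nat (d^2)"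
proof -
  let ?Q = "\<lambda>z::wlabel. z 1 = z 0 \<and> z 2 = z 0 \<and> z 3 = z 0 \<and> z 5 = z 4 \<and> z 6 = z 4 \<and> z 7 = z 4"
  have "(\<Sum>z\<in>Wl d. tri z * circ z) = (\<Sum>z\<in>Wl d. if ?Q z then (1::complex) else 0)"
  proof (rule sum.cong[OF refl])
    fix z :: wlabel
    have "tri z * circ z = (if (z 0 = z 3 \<and> z 1 = z 2 \<and> z 4 = z 7 \<and> z 5 = z 6) \<and> (z 0 = z 1 \<and> z 2 = z 3 \<and> z 4 = z 5 \<and> z 6 = z 7) then 1 else 0)"
      unfolding tri_def circ_def by simp
    moreover have "((z 0 = z 3 \<and> z 1 = z 2 \<and> z 4 = z 7 \<and> z 5 = z 6) \<and> (z 0 = z 1 \<and> z 2 = z 3 \<and> z 4 = z 5 \<and> z 6 = z 7)) = ?Q z"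
      by auto
    ultimately show "tri z * circ z = (if ?Q z then 1 else 0)" by simp
  qed
  also have "\<dots> = of_nat (d^2)"
  proof (rule count_two[where ia=0 and ja=4 and f="\<lambda>i j (t::nat). if t < 4 then i else if t < 8 then j else undefined"])
    fix z assume z: "z \<in> Wl d" "?Q z"
    show "(\<lambda>t. if t < 4 then z 0 else if t < 8 then z 4 else undefined) = z"
    proof
      fix t
      show "(if t < 4 then z 0 else if t < 8 then z 4 else undefined) = z t"
      proof (cases "t < 8")
        case True
        then show ?thesis using lt8_cases[OF True] z(2) by (elim disjE) simp_all
      next
        case False then show ?thesis using Wl_undef[OF z(1) False] by simp
      qed
    qed
  next
    fix i j assume ij: "i < d" "j < d"
    show "(\<lambda>t::nat. if t < 4 then i else if t < 8 then j else undefined) \<in> Wl d \<and>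
          ?Q (\<lambda>t::nat. if t < 4 then i else if t < 8 then j else undefined) \<and>
          (\<lambda>t::nat. if t < 4 then i else if t < 8 then j else undefined) 0 = i \<and>
          (\<lambda>t::nat. if t < 4 then i else if t < 8 then j else undefined) 4 = j"
      using ij by (intro conjI Wl_I) simp_all
  qed auto
  finally show ?thesis .
qed




lemma if_mult_ind: "(if A then (1::complex) else 0) * (if B then 1 else 0) = (if A \<and> B then 1 else 0)"
  by simp

lemma cc_ext:
  fixes z :: wlabel
  assumes z: "z 1 = z 0 \<and> z 6 = z 0 \<and> z 7 = z 0 \<and> z 3 = z 2 \<and> z 4 = z 2 \<and> z 5 = z 2" and W: "z \<in> Wl d"
  shows "(\<lambda>(t::nat). if t < 8 then (if t < 2 \<or> 5 < t then z 0 else z 2) else undefined) = z"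
proof
  fix t :: nat
  show "(if t < 8 then (if t < 2 \<or> 5 < t then z 0 else z 2) else undefined) = z t"
  proof (cases "t < 8")
    case True
    have "(if t < 2 \<or> 5 < t then z 0 else z 2) = z t"
      using lt8_cases[OF True]
    proof (elim disjE)
    qed (use z in simp_all)
    then show ?thesis using True by simp
  next
    case False then show ?thesis using Wl_undef[OF W False] by simp
  qed
qed

lemma end_circ_cross: "(\<Sum>z\<in>Wl d. circ z * cross z) = of_nat (d^2)"
proof -
  let ?Q = "\<lambda>z::wlabel. z 1 = z 0 \<and> z 6 = z 0 \<and> z 7 = z 0 \<and> z 3 = z 2 \<and> z 4 = z 2 \<and> z 5 = z 2"
  let ?f = "\<lambda>i j (t::nat). if t < 8 then (if t < 2 \<or> 5 < t then i else j) else undefined"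
  have "(\<Sum>z\<in>Wl d. circ z * cross z) = (\<Sum>z\<in>Wl d. if ?Q z then (1::complex) else 0)"
  proof (rule sum.cong[OF refl])
    fix z :: wlabel
    have f1: "circ z * cross z = (if (z 0 = z 1 \<and> z 2 = z 3 \<and> z 4 = z 5 \<and> z 6 = z 7) \<and> (z 0 = z 7 \<and> z 1 = z 6 \<and> z 2 = z 5 \<and> z 3 = z 4) then 1 else 0)"
      unfolding cross_def circ_def by (rule if_mult_ind)
    have f2: "((z 0 = z 1 \<and> z 2 = z 3 \<and> z 4 = z 5 \<and> z 6 = z 7) \<and> (z 0 = z 7 \<and> z 1 = z 6 \<and> z 2 = z 5 \<and> z 3 = z 4)) = ?Q z"
      by auto
    show "circ z * cross z = (if ?Q z then 1 else 0)" unfolding f1 f2 by (rule refl)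
  qed
  also have "\<dots> = of_nat (d^2)"
  proof (rule count_two[where ia=0 and ja=2 and f="?f"])
    fix z assume z: "z \<in> Wl d" "?Q z"
    show "?f (z 0) (z 2) = z" by (rule cc_ext[OF z(2) z(1)])
  next
    fix i j assume ij: "i < d" "j < d"
    have W: "?f i j \<in> Wl d" by (rule Wl_I) (simp_all add: ij)
    show "?f i j \<in> Wl d \<and> ?Q (?f i j) \<and> ?f i j 0 = i \<and> ?f i j 2 = j"
      using W by simp
  qed auto
  finally show ?thesis .
qed




definition lab :: "nat set \<Rightarrow> wlabel" where
  "lab A = (\<lambda>t. if t < 8 then (if t \<in> A then 1 else 0) else undefined)"

lemma lab_Wl: "2 \<le> d \<Longrightarrow> lab A \<in> Wl d"
  by (rule Wl_I) (auto simp: lab_def)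

lemma lab_vals:
  "tri (lab {1,2,5,6}) = 1" "circ (lab {1,2,5,6}) = 0"
  "tri (lab {2,3,6,7}) = 0" "circ (lab {2,3,6,7}) = 1" "cross (lab {2,3,6,7}) = 0"
  "circ (lab {1,3,4,6}) = 0" "cross (lab {1,3,4,6}) = 1"
  by (simp_all add: lab_def tri_def circ_def cross_def)

lemma lin_indep_gen:
  assumes fl: "fl \<in> Wl d" and gl: "gl \<in> Wl d"
    and v: "f fl = 1" "g fl = 0" "f gl = 0" "g gl = 1"
  shows "lin_indep_family d x (prodvec f g x)"
  unfolding lin_indep_family_def
proof (intro allI impI)
  fix c :: "nat \<Rightarrow> complex" and z
  assume h: "\<forall>a\<in>Ml d x. (\<Sum>y\<le>x. c y * prodvec f g x y a) = 0" and z: "z \<le> x"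
  define a where "a = (\<lambda>m. if m \<in> {1..x} then (if m \<le> z then fl else gl) else undefined)"
  have aM: "a \<in> Ml d x" unfolding Ml_def a_def using fl gl by (auto intro!: PiE_I)
  have pv: "prodvec f g x y a = (if y = z then 1 else 0)" if y: "y \<le> x" for y
  proof (cases "y = z")
    case True
    have "prodvec f g x y a = (\<Prod>m\<in>{1..x}. 1)"
      unfolding prodvec_def by (intro prod.cong refl) (auto simp: a_def v True)
    then show ?thesis using True by simp
  next
    case False
    show ?thesis
    proof (cases "y < z")
      case True
      have "z \<in> {1..x}" using True z by auto
      moreover have "(if z \<le> y then f (a z) else g (a z)) = 0" using True \<open>z \<in> {1..x}\<close> by (simp add: a_def v)
      ultimately have "prodvec f g x y a = 0" unfolding prodvec_def by (intro prod_zero[OF finite_atLeastAtMost] bexI)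
      then show ?thesis using False by simp
    next
      case False2: False
      then have yz: "z < y" using False by simp
      have "y \<in> {1..x}" using yz y by auto
      moreover have "(if y \<le> y then f (a y) else g (a y)) = 0" using yz \<open>y \<in> {1..x}\<close> by (simp add: a_def v)
      ultimately have "prodvec f g x y a = 0" unfolding prodvec_def by (intro prod_zero[OF finite_atLeastAtMost] bexI)
      then show ?thesis using False by simp
    qed
  qed
  have "(\<Sum>y\<le>x. c y * prodvec f g x y a) = (\<Sum>y\<le>x. c y * (if y = z then 1 else 0))"
    using pv by (intro sum.cong refl) auto
  also have "\<dots> = c z" using z by (simp add: if_distrib cong: if_cong)
  finally show "c z = 0" using h aM by simp
qed

lemma lin_indep_r: "2 \<le> d \<Longrightarrow> lin_indep_family d x (rvec x)"
proof -
  assume d: "2 \<le> d"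
  have "lin_indep_family d x (prodvec tri circ x)"
    by (rule lin_indep_gen[OF lab_Wl[OF d] lab_Wl[OF d]]) (rule lab_vals)+
  moreover have "rvec x = prodvec tri circ x" by (rule ext) (simp add: rvec_def)
  ultimately show ?thesis by simp
qed

lemma lin_indep_l: "2 \<le> d \<Longrightarrow> lin_indep_family d x (lvec x)"
proof -
  assume d: "2 \<le> d"
  have "lin_indep_family d x (prodvec circ cross x)"
    by (rule lin_indep_gen[OF lab_Wl[OF d] lab_Wl[OF d]]) (rule lab_vals)+
  moreover have "lvec x = prodvec circ cross x" by (rule ext) (simp add: lvec_def)
  ultimately show ?thesis by simp
qed




lemma fwA: "(\<Sum>x\<in>A. (\<sigma> x::complex) * (\<Sum>y\<in>A. g x y * \<sigma> y)) = (\<Sum>x\<in>A. \<Sum>y\<in>A. \<sigma> x * \<sigma> y * g x y)"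
  unfolding sum_distrib_left by (intro sum.cong refl) (simp only: ac_simps)
lemma fwB: "(\<Sum>x\<in>A. (\<sigma> x::complex) * (\<Sum>y\<in>A. g x y * \<sigma> y)) = (\<Sum>y\<in>A. \<Sum>x\<in>A. \<sigma> y * \<sigma> x * g x y)"
  unfolding fwA by (subst sum.swap) (intro sum.cong refl, simp only: ac_simps)
lemma bwA: "(\<Sum>w\<in>A. (\<Sum>s\<in>A. g w s * \<sigma> s) * (\<sigma> w::complex)) = (\<Sum>w\<in>A. \<Sum>s\<in>A. \<sigma> w * \<sigma> s * g w s)"
  unfolding sum_distrib_right by (intro sum.cong refl) (simp only: ac_simps)
lemma bwB: "(\<Sum>w\<in>A. (\<Sum>s\<in>A. g w s * \<sigma> s) * (\<sigma> w::complex)) = (\<Sum>s\<in>A. \<Sum>w\<in>A. \<sigma> s * \<sigma> w * g w s)"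
  unfolding bwA by (subst sum.swap) (intro sum.cong refl, simp only: ac_simps)

lemma finWl: "finite (Wl d)" unfolding Wl_def by (simp add: finite_PiE)

lemma chain_contract2:
  fixes \<alpha> \<beta> :: "'s \<Rightarrow> complex"
  assumes "finite S" "finite S'"
  shows "(\<Sum>a\<in>PiE {1..n} (\<lambda>_. S'). chainsum S n \<alpha> (\<lambda>m z' z. P m z' z (a m)) \<beta> * (\<Prod>m\<in>{1..n}. Q m (a m)))
       = chainsum S n \<alpha> (\<lambda>m z' z. \<Sum>s\<in>S'. P m z' z s * Q m s) \<beta>"
proof -
  have "(\<Sum>a\<in>PiE {1..n} (\<lambda>_. S'). chainsum S n \<alpha> (\<lambda>m z' z. P m z' z (a m)) \<beta> * (\<Prod>m\<in>{1..n}. Q m (a m)))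
     = (\<Sum>a\<in>PiE {1..n} (\<lambda>_. S'). (\<Sum>k\<in>PiE {0..n} (\<lambda>_. S). (\<alpha> (k 0) * \<beta> (k n)) * (\<Prod>m\<in>{1..n}. P m (k (m - 1)) (k m) (a m))) * (\<Prod>m\<in>{1..n}. Q m (a m)))"
    unfolding chainsum_def by (simp only: ac_simps)
  also have "\<dots> = (\<Sum>k\<in>PiE {0..n} (\<lambda>_. S). (\<alpha> (k 0) * \<beta> (k n)) * (\<Prod>m\<in>{1..n}. \<Sum>s\<in>S'. P m (k (m - 1)) (k m) s * Q m s))"
    by (rule chain_contract[OF assms(2)]) simp
  also have "\<dots> = chainsum S n \<alpha> (\<lambda>m z' z. \<Sum>s\<in>S'. P m z' z s * Q m s) \<beta>"
    unfolding chainsum_def by (intro sum.cong refl) (simp only: ac_simps)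
  finally show ?thesis .
qed

lemma Ml_mem: "e \<in> Ml d x \<Longrightarrow> m \<in> {1..x} \<Longrightarrow> e m \<in> Wl d"
  unfolding Ml_def by (rule PiE_mem)

lemma prodvec_prod: "prodvec f g x y a = (\<Prod>m\<in>{1..x}. (\<lambda>m s. if m \<le> y then f s else g s) m (a m))"
  unfolding prodvec_def by simp

lemma R_right:
  assumes y: "y \<le> x"
    and dU: "\<forall>m\<in>{1..y}. unitary_gate d (dual_gate (Us m))"
    and uU: "\<forall>m\<in>{Suc y..x}. unitary_gate d (Us m)"
  shows "right_eig d x (Rmat d Us x) (of_nat (d^2)) (rvec x y)"
  unfolding right_eig_def
proof
  fix e assume e: "e \<in> Ml d x"
  define Q where "Q = (\<lambda>m s. if m \<le> y then tri s else circ s)"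
  define H where "H = (\<lambda>m z' z. \<Sum>s\<in>Wl d. gateG (Us m) z' (e m) s z * Q m s)"
  define u where "u = (\<lambda>m. Q m (e m))"
  have "mat_vec d x (Rmat d Us x) (rvec x y) e
      = (\<Sum>a\<in>PiE {1..x} (\<lambda>_. Wl d). chainsum (Wl d) x tri (\<lambda>m z' z. gateG (Us m) z' (e m) (a m) z) circ * (\<Prod>m\<in>{1..x}. Q m (a m)))"
    unfolding mat_vec_def Ml_def Rmat_def chainsum_def rvec_def prodvec_def Q_def by simp
  also have "\<dots> = chainsum (Wl d) x tri H circ"
    unfolding H_def by (rule chain_contract2[OF finWl finWl])
  also have "\<dots> = (\<Prod>m\<in>{1..x}. u m) * (\<Sum>z\<in>Wl d. tri z * circ z)"
  proof (rule chainsum_eval[OF finWl y])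
    fix m z assume m: "m \<in> {1..y}" and z: "z \<in> Wl d"
    have em: "e m \<in> Wl d" using Ml_mem[OF e] m y by auto
    have "(\<Sum>z'\<in>Wl d. tri z' * H m z' z) = (\<Sum>s\<in>Wl d. \<Sum>z'\<in>Wl d. tri s * tri z' * gateG (Us m) z' (e m) s z)"
      unfolding H_def Q_def using m by (simp add: fwB)
    also have "\<dots> = tri z * tri (e m)"
      unfolding tri_pf by (rule gate_D1[OF bspec[OF dU m] pairing_t em z])
    finally show "(\<Sum>z'\<in>Wl d. tri z' * H m z' z) = u m * tri z"
      using m by (simp add: u_def Q_def mult.commute)
  next
    fix m z assume m: "m \<in> {Suc y..x}" and z: "z \<in> Wl d"
    have em: "e m \<in> Wl d" using Ml_mem[OF e] m y by auto
    have "(\<Sum>w\<in>Wl d. H m z w * circ w) = (\<Sum>s\<in>Wl d. \<Sum>w\<in>Wl d. circ s * circ w * gateG (Us m) z (e m) s w)"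
      unfolding H_def Q_def using m by (simp add: bwB)
    also have "\<dots> = circ z * circ (e m)"
      unfolding circ_pf by (rule gate_U1[OF bspec[OF uU m] pairing_c z em])
    finally show "(\<Sum>w\<in>Wl d. H m z w * circ w) = u m * circ z"
      using m by (simp add: u_def Q_def mult.commute)
  qed
  also have "\<dots> = of_nat (d^2) * rvec x y e"
    unfolding end_tri_circ u_def Q_def rvec_def prodvec_def by (simp add: mult.commute)
  finally show "mat_vec d x (Rmat d Us x) (rvec x y) e = of_nat (d^2) * rvec x y e" .
qed

lemma R_left:
  assumes y: "y \<le> x"
    and uU: "\<forall>m\<in>{1..y}. unitary_gate d (Us m)"
    and dU: "\<forall>m\<in>{Suc y..x}. unitary_gate d (dual_gate (Us m))"
  shows "left_eig d x (Rmat d Us x) (of_nat (d^2)) (rvec x y)"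
  unfolding left_eig_def
proof
  fix a assume a: "a \<in> Ml d x"
  define Q where "Q = (\<lambda>m s. if m \<le> y then tri s else circ s)"
  define H where "H = (\<lambda>m z' z. \<Sum>s\<in>Wl d. gateG (Us m) z' s (a m) z * Q m s)"
  define u where "u = (\<lambda>m. Q m (a m))"
  have "vec_mat d x (rvec x y) (Rmat d Us x) a
      = (\<Sum>e\<in>PiE {1..x} (\<lambda>_. Wl d). chainsum (Wl d) x tri (\<lambda>m z' z. gateG (Us m) z' (e m) (a m) z) circ * (\<Prod>m\<in>{1..x}. Q m (e m)))"
    unfolding vec_mat_def Ml_def Rmat_def chainsum_def rvec_def prodvec_def Q_def
    by (intro sum.cong refl) (simp only: mult.commute)
  also have "\<dots> = chainsum (Wl d) x tri H circ"
    unfolding H_def by (rule chain_contract2[OF finWl finWl])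
  also have "\<dots> = (\<Prod>m\<in>{1..x}. u m) * (\<Sum>z\<in>Wl d. tri z * circ z)"
  proof (rule chainsum_eval[OF finWl y])
    fix m z assume m: "m \<in> {1..y}" and z: "z \<in> Wl d"
    have am: "a m \<in> Wl d" using Ml_mem[OF a] m y by auto
    have "(\<Sum>z'\<in>Wl d. tri z' * H m z' z) = (\<Sum>z'\<in>Wl d. \<Sum>s\<in>Wl d. tri z' * tri s * gateG (Us m) z' s (a m) z)"
      unfolding H_def Q_def using m by (simp add: fwA)
    also have "\<dots> = tri (a m) * tri z"
      unfolding tri_pf by (rule gate_U2[OF bspec[OF uU m] pairing_t am z])
    finally show "(\<Sum>z'\<in>Wl d. tri z' * H m z' z) = u m * tri z"
      using m by (simp add: u_def Q_def)
  next
    fix m z assume m: "m \<in> {Suc y..x}" and z: "z \<in> Wl d"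
    have am: "a m \<in> Wl d" using Ml_mem[OF a] m y by auto
    have "(\<Sum>w\<in>Wl d. H m z w * circ w) = (\<Sum>w\<in>Wl d. \<Sum>s\<in>Wl d. circ w * circ s * gateG (Us m) z s (a m) w)"
      unfolding H_def Q_def using m by (simp add: bwA)
    also have "\<dots> = circ (a m) * circ z"
      unfolding circ_pf by (rule gate_D2[OF bspec[OF dU m] pairing_c z am])
    finally show "(\<Sum>w\<in>Wl d. H m z w * circ w) = u m * circ z"
      using m by (simp add: u_def Q_def)
  qed
  also have "\<dots> = of_nat (d^2) * rvec x y a"
    unfolding end_tri_circ u_def Q_def rvec_def prodvec_def by (simp add: mult.commute)
  finally show "vec_mat d x (rvec x y) (Rmat d Us x) a = of_nat (d^2) * rvec x y a" .
qed

lemma L_right: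
  assumes y: "y \<le> x"
    and dU: "\<forall>m\<in>{1..y}. unitary_gate d (dual_gate (Us m))"
    and uU: "\<forall>m\<in>{Suc y..x}. unitary_gate d (Us m)"
  shows "right_eig d x (Lmat d Us x) (of_nat (d^2)) (lvec x y)"
  unfolding right_eig_def
proof
  fix b assume b: "b \<in> Ml d x"
  define Q where "Q = (\<lambda>m s. if m \<le> y then circ s else cross s)"
  define H where "H = (\<lambda>m z' z. \<Sum>s\<in>Wl d. gateG (Us m) s z z' (b m) * Q m s)"
  define u where "u = (\<lambda>m. Q m (b m))"
  have "mat_vec d x (Lmat d Us x) (lvec x y) b
      = (\<Sum>c\<in>PiE {1..x} (\<lambda>_. Wl d). chainsum (Wl d) x circ (\<lambda>m z' z. gateG (Us m) (c m) z z' (b m)) cross * (\<Prod>m\<in>{1..x}. Q m (c m)))"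
    unfolding mat_vec_def Ml_def Lmat_def chainsum_def lvec_def prodvec_def Q_def by simp
  also have "\<dots> = chainsum (Wl d) x circ H cross"
    unfolding H_def by (rule chain_contract2[OF finWl finWl])
  also have "\<dots> = (\<Prod>m\<in>{1..x}. u m) * (\<Sum>z\<in>Wl d. circ z * cross z)"
  proof (rule chainsum_eval[OF finWl y])
    fix m z assume m: "m \<in> {1..y}" and z: "z \<in> Wl d"
    have bm: "b m \<in> Wl d" using Ml_mem[OF b] m y by auto
    have "(\<Sum>z'\<in>Wl d. circ z' * H m z' z) = (\<Sum>z'\<in>Wl d. \<Sum>s\<in>Wl d. circ z' * circ s * gateG (Us m) s z z' (b m))"
      unfolding H_def Q_def using m by (simp add: fwA)
    also have "\<dots> = circ (b m) * circ z"
      unfolding circ_pf by (rule gate_D1[OF bspec[OF dU m] pairing_c z bm])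
    finally show "(\<Sum>z'\<in>Wl d. circ z' * H m z' z) = u m * circ z"
      using m by (simp add: u_def Q_def)
  next
    fix m z assume m: "m \<in> {Suc y..x}" and z: "z \<in> Wl d"
    have bm: "b m \<in> Wl d" using Ml_mem[OF b] m y by auto
    have "(\<Sum>w\<in>Wl d. H m z w * cross w) = (\<Sum>s\<in>Wl d. \<Sum>w\<in>Wl d. cross s * cross w * gateG (Us m) s w z (b m))"
      unfolding H_def Q_def using m by (simp add: bwB)
    also have "\<dots> = cross z * cross (b m)"
      unfolding cross_pf by (rule gate_U2[OF bspec[OF uU m] pairing_x z bm])
    finally show "(\<Sum>w\<in>Wl d. H m z w * cross w) = u m * cross z"
      using m by (simp add: u_def Q_def mult.commute)
  qed
  also have "\<dots> = of_nat (d^2) * lvec x y b"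
    unfolding end_circ_cross u_def Q_def lvec_def prodvec_def by (simp add: mult.commute)
  finally show "mat_vec d x (Lmat d Us x) (lvec x y) b = of_nat (d^2) * lvec x y b" .
qed

lemma L_left:
  assumes y: "y \<le> x"
    and uU: "\<forall>m\<in>{1..y}. unitary_gate d (Us m)"
    and dU: "\<forall>m\<in>{Suc y..x}. unitary_gate d (dual_gate (Us m))"
  shows "left_eig d x (Lmat d Us x) (of_nat (d^2)) (lvec x y)"
  unfolding left_eig_def
proof
  fix c assume c: "c \<in> Ml d x"
  define Q where "Q = (\<lambda>m s. if m \<le> y then circ s else cross s)"
  define H where "H = (\<lambda>m z' z. \<Sum>s\<in>Wl d. gateG (Us m) (c m) z z' s * Q m s)"
  define u where "u = (\<lambda>m. Q m (c m))"
  have "vec_mat d x (lvec x y) (Lmat d Us x) c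
      = (\<Sum>b\<in>PiE {1..x} (\<lambda>_. Wl d). chainsum (Wl d) x circ (\<lambda>m z' z. gateG (Us m) (c m) z z' (b m)) cross * (\<Prod>m\<in>{1..x}. Q m (b m)))"
    unfolding vec_mat_def Ml_def Lmat_def chainsum_def lvec_def prodvec_def Q_def
    by (intro sum.cong refl) (simp only: mult.commute)
  also have "\<dots> = chainsum (Wl d) x circ H cross"
    unfolding H_def by (rule chain_contract2[OF finWl finWl])
  also have "\<dots> = (\<Prod>m\<in>{1..x}. u m) * (\<Sum>z\<in>Wl d. circ z * cross z)"
  proof (rule chainsum_eval[OF finWl y])
    fix m z assume m: "m \<in> {1..y}" and z: "z \<in> Wl d"
    have cm: "c m \<in> Wl d" using Ml_mem[OF c] m y by auto
    have "(\<Sum>z'\<in>Wl d. circ z' * H m z' z) = (\<Sum>z'\<in>Wl d. \<Sum>s\<in>Wl d. circ z' * circ s * gateG (Us m) (c m) z z' s)"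
      unfolding H_def Q_def using m by (simp add: fwA)
    also have "\<dots> = circ (c m) * circ z"
      unfolding circ_pf by (rule gate_U1[OF bspec[OF uU m] pairing_c cm z])
    finally show "(\<Sum>z'\<in>Wl d. circ z' * H m z' z) = u m * circ z"
      using m by (simp add: u_def Q_def)
  next
    fix m z assume m: "m \<in> {Suc y..x}" and z: "z \<in> Wl d"
    have cm: "c m \<in> Wl d" using Ml_mem[OF c] m y by auto
    have "(\<Sum>w\<in>Wl d. H m z w * cross w) = (\<Sum>s\<in>Wl d. \<Sum>w\<in>Wl d. cross s * cross w * gateG (Us m) (c m) w z s)"
      unfolding H_def Q_def using m by (simp add: bwB)
    also have "\<dots> = cross z * cross (c m)"
      unfolding cross_pf by (rule gate_D2[OF bspec[OF dU m] pairing_x cm z])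
    finally show "(\<Sum>w\<in>Wl d. H m z w * cross w) = u m * cross z"
      using m by (simp add: u_def Q_def mult.commute)
  qed
  also have "\<dots> = of_nat (d^2) * lvec x y c"
    unfolding end_circ_cross u_def Q_def lvec_def prodvec_def by (simp add: mult.commute)
  finally show "vec_mat d x (lvec x y) (Lmat d Us x) c = of_nat (d^2) * lvec x y c" .
qed



theorem lemma2:
  fixes d x :: nat and Us :: "nat \<Rightarrow> gate"
  assumes "d \<ge> 2" and "x \<ge> 1"
    and "\<forall>m\<in>{1..x}. unitary_gate d (Us m)"
  shows "((\<forall>m\<in>{1..x}. dual_unitary d (Us m)) \<longrightarrow>
           lin_indep_family d x (rvec x) \<and> lin_indep_family d x (lvec x) \<and>
           (\<forall>y\<le>x. right_eig d x (Rmat d Us x) (of_nat (d^2)) (rvec x y) \<and>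
                   left_eig d x (Rmat d Us x) (of_nat (d^2)) (rvec x y) \<and>
                   right_eig d x (Lmat d Us x) (of_nat (d^2)) (lvec x y) \<and>
                   left_eig d x (Lmat d Us x) (of_nat (d^2)) (lvec x y)))
       \<and> right_eig d x (Rmat d Us x) (of_nat (d^2)) (rvec x 0)
       \<and> right_eig d x (Lmat d Us x) (of_nat (d^2)) (lvec x 0)
       \<and> left_eig d x (Rmat d Us x) (of_nat (d^2)) (rvec x x)
       \<and> left_eig d x (Lmat d Us x) (of_nat (d^2)) (lvec x x)"
proof (intro conjI impI allI)
  assume du: "\<forall>m\<in>{1..x}. dual_unitary d (Us m)"
  show "lin_indep_family d x (rvec x)" by (rule lin_indep_r[OF assms(1)])
  show "lin_indep_family d x (lvec x)" by (rule lin_indep_l[OF assms(1)])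
  fix y assume y: "y \<le> x"
  have D: "\<forall>m\<in>{1..y}. unitary_gate d (dual_gate (Us m))" "\<forall>m\<in>{Suc y..x}. unitary_gate d (dual_gate (Us m))"
    using du y unfolding dual_unitary_def by auto
  have U: "\<forall>m\<in>{1..y}. unitary_gate d (Us m)" "\<forall>m\<in>{Suc y..x}. unitary_gate d (Us m)"
    using assms(3) y by auto
  show "right_eig d x (Rmat d Us x) (of_nat (d^2)) (rvec x y)" by (rule R_right[OF y D(1) U(2)])
  show "left_eig d x (Rmat d Us x) (of_nat (d^2)) (rvec x y)" by (rule R_left[OF y U(1) D(2)])
  show "right_eig d x (Lmat d Us x) (of_nat (d^2)) (lvec x y)" by (rule L_right[OF y D(1) U(2)])
  show "left_eig d x (Lmat d Us x) (of_nat (d^2)) (lvec x y)" by (rule L_left[OF y U(1) D(2)])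
next
  have U0: "\<forall>m\<in>{Suc 0..x}. unitary_gate d (Us m)" using assms(3) by simp
  have E0: "\<forall>m\<in>{1..0::nat}. unitary_gate d (dual_gate (Us m))" by simp
  have Ex: "\<forall>m\<in>{Suc x..x}. unitary_gate d (dual_gate (Us m))" by simp
  show "right_eig d x (Rmat d Us x) (of_nat (d^2)) (rvec x 0)" by (rule R_right[OF le0 E0 U0])
  show "right_eig d x (Lmat d Us x) (of_nat (d^2)) (lvec x 0)" by (rule L_right[OF le0 E0 U0])
  show "left_eig d x (Rmat d Us x) (of_nat (d^2)) (rvec x x)" by (rule R_left[OF order_refl assms(3) Ex])
  show "left_eig d x (Lmat d Us x) (of_nat (d^2)) (lvec x x)" by (rule L_left[OF order_refl assms(3) Ex])
qed

end
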